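(* Let $T$ be a singular weighted tree with adjacency matrix $A$. Then $A$ and $A^{\#}$ have the same zero–nonzero pattern if and only if $T$ is a weighted star.
   Context: A weighted tree has a nonzero real weight on each edge; its adjacency matrix $A$ has $(i,j)$ entry equal to the weight of edge $v_iv_j$, or $0$ if no edge; $T$ is singular if $A$ is singular. $A^{\#}$ is the group inverse of $A$, the unique $X$ with $AXA=A$, $XAX=X$, $AX=XA$. *)

theory Defs
  imports "Jordan_Normal_Form.Determinant"
begin

text \<open>Vertices of a weighted tree on n vertices are 0..n-1; the tree is given by
its (real, symmetric) adjacency matrix A: the entry A(i,j) is the (nonzero) weight of
edge {i,j}, or 0 if there is no such edge.\<close>

definition adj :: "nat \<Rightarrow> real mat \<Rightarrow> nat \<Rightarrow> nat \<Rightarrow> bool" where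
  "adj n A i j \<longleftrightarrow> i < n \<and> j < n \<and> i \<noteq> j \<and> A $$ (i, j) \<noteq> 0"

definition graph_connected :: "nat \<Rightarrow> real mat \<Rightarrow> bool" where
  "graph_connected n A \<longleftrightarrow> (\<forall>i<n. \<forall>j<n. (adj n A)\<^sup>*\<^sup>* i j)"

definition is_cycle :: "nat \<Rightarrow> real mat \<Rightarrow> nat list \<Rightarrow> bool" where
  "is_cycle n A vs \<longleftrightarrow> length vs \<ge> 3 \<and> distinct vs \<and>
     (\<forall>k. Suc k < length vs \<longrightarrow> adj n A (vs ! k) (vs ! Suc k)) \<and>
     adj n A (last vs) (hd vs)"

definition graph_acyclic :: "nat \<Rightarrow> real mat \<Rightarrow> bool" where
  "graph_acyclic n A \<longleftrightarrow> (\<nexists>vs. is_cycle n A vs)"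

definition weighted_tree :: "nat \<Rightarrow> real mat \<Rightarrow> bool" where
  "weighted_tree n A \<longleftrightarrow> n \<ge> 1 \<and> A \<in> carrier_mat n n \<and>
     (\<forall>i<n. \<forall>j<n. A $$ (i, j) = A $$ (j, i)) \<and> (\<forall>i<n. A $$ (i, i) = 0) \<and>
     graph_connected n A \<and> graph_acyclic n A"

definition weighted_star :: "nat \<Rightarrow> real mat \<Rightarrow> bool" where
  "weighted_star n A \<longleftrightarrow> weighted_tree n A \<and> (\<exists>c<n. \<forall>j<n. j \<noteq> c \<longrightarrow> adj n A c j)"

definition is_group_inverse :: "nat \<Rightarrow> real mat \<Rightarrow> real mat \<Rightarrow> bool" where
  "is_group_inverse n A X \<longleftrightarrow> X \<in> carrier_mat n n \<and>
     A * X * A = A \<and> X * A * X = X \<and> A * X = X * A"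

definition group_inverse :: "nat \<Rightarrow> real mat \<Rightarrow> real mat" where
  "group_inverse n A = (THE X. is_group_inverse n A X)"

definition same_pattern :: "nat \<Rightarrow> real mat \<Rightarrow> real mat \<Rightarrow> bool" where
  "same_pattern n A B \<longleftrightarrow> (\<forall>i<n. \<forall>j<n. (A $$ (i, j) = 0) \<longleftrightarrow> (B $$ (i, j) = 0))"

end

theory Submission
  imports Defs
begin

definition mlc :: "nat \<Rightarrow> (nat \<Rightarrow> real) \<Rightarrow> nat set \<Rightarrow> (nat \<Rightarrow> real mat) \<Rightarrow> real mat" where
  "mlc n c K F = mat n n (\<lambda>(i,j). \<Sum>k\<in>K. c k * F k $$ (i,j))"

lemma mlc_carrier[simp]: "mlc n c K F \<in> carrier_mat n n"
  unfolding mlc_def by auto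

lemma mlc_dim[simp]: "dim_row (mlc n c K F) = n" "dim_col (mlc n c K F) = n"
  unfolding mlc_def by auto

lemma mlc_index[simp]: "i < n \<Longrightarrow> j < n \<Longrightarrow> mlc n c K F $$ (i,j) = (\<Sum>k\<in>K. c k * F k $$ (i,j))"
  unfolding mlc_def by auto

lemma mult_mlc:
  assumes M: "M \<in> carrier_mat n n" and F: "\<And>k. k \<in> K \<Longrightarrow> F k \<in> carrier_mat n n"
  shows "M * mlc n c K F = mlc n c K (\<lambda>k. M * F k)"
proof (rule eq_matI)
  fix i j assume i: "i < dim_row (mlc n c K (\<lambda>k. M * F k))" and j: "j < dim_col (mlc n c K (\<lambda>k. M * F k))"
  hence i: "i < n" and j: "j < n" by auto
  have "(M * mlc n c K F) $$ (i,j) = (\<Sum>l<n. M $$ (i,l) * (\<Sum>k\<in>K. c k * F k $$ (l,j)))"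
    using M i j by (simp add: scalar_prod_def row_def col_def lessThan_atLeast0)
  also have "\<dots> = (\<Sum>k\<in>K. c k * (\<Sum>l<n. M $$ (i,l) * F k $$ (l,j)))"
    by (simp add: sum_distrib_left sum_distrib_right mult_ac sum.swap[of _ K])
  also have "\<dots> = mlc n c K (\<lambda>k. M * F k) $$ (i,j)"
  proof -
    have "(M * F k) $$ (i,j) = (\<Sum>l<n. M $$ (i,l) * F k $$ (l,j))" if k: "k \<in> K" for k
      using M F[OF k] i j by (simp add: scalar_prod_def row_def col_def lessThan_atLeast0 carrier_matD)
    thus ?thesis using i j by simp
  qed
  finally show "(M * mlc n c K F) $$ (i,j) = mlc n c K (\<lambda>k. M * F k) $$ (i,j)" .
qed (use M in auto)

lemma transp_self_diag:
  fixes M :: "real mat"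
  assumes M: "M \<in> carrier_mat n n" and j: "j < n"
  shows "(transpose_mat M * M) $$ (j,j) = (\<Sum>l<n. (M $$ (l,j))^2)"
  using M j by (simp add: scalar_prod_def row_def col_def lessThan_atLeast0 power2_eq_square carrier_matD)

lemma kernel_sq:
  fixes A C :: "real mat"
  assumes A: "A \<in> carrier_mat n n" and C: "C \<in> carrier_mat n n"
    and sym: "transpose_mat A = A" and AAC: "A * (A * C) = 0\<^sub>m n n"
  shows "A * C = 0\<^sub>m n n"
proof -
  let ?M = "A * C"
  have M: "?M \<in> carrier_mat n n" using A C by auto
  have "transpose_mat ?M * ?M = transpose_mat C * transpose_mat A * (A * C)"
    using transpose_mult[OF A C] by simp
  also have "\<dots> = transpose_mat C * (A * (A * C))"
    using A C sym by (metis assoc_mult_mat mult_carrier_mat transpose_carrier_mat)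
  also have "\<dots> = 0\<^sub>m n n" using AAC C by auto
  finally have MM: "transpose_mat ?M * ?M = 0\<^sub>m n n" .
  show ?thesis
  proof (rule eq_matI)
    fix i j assume "i < dim_row (0\<^sub>m n n :: real mat)" "j < dim_col (0\<^sub>m n n :: real mat)"
    hence i: "i < n" and j: "j < n" by auto
    have "(transpose_mat ?M * ?M) $$ (j,j) = (\<Sum>l<n. (?M $$ (l,j))^2)"
      by (rule transp_self_diag[OF M j])
    hence "(\<Sum>l<n. (?M $$ (l,j))^2) = 0" using MM j by simp
    hence "\<forall>l\<in>{..<n}. (?M $$ (l,j))^2 = 0" by (subst sum_nonneg_eq_0_iff[symmetric]) auto
    hence "(?M $$ (i,j))^2 = 0" using i by auto
    thus "?M $$ (i,j) = 0\<^sub>m n n $$ (i,j)" using i j by simp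
  qed (use A C in auto)
qed

lemma pow_left:
  assumes A: "A \<in> carrier_mat n n"
  shows "A * A ^\<^sub>m k = A ^\<^sub>m (Suc k)"
proof (induction k)
  case 0 then show ?case using A by simp
next
  case (Suc k)
  have "A * A ^\<^sub>m Suc k = (A * A ^\<^sub>m k) * A" using A
    by (simp add: assoc_mult_mat[of A n n "A ^\<^sub>m k" n A n])
  also have "\<dots> = A ^\<^sub>m Suc (Suc k)" using Suc by simp
  finally show ?case .
qed

lemma pow_add_mat:
  assumes A: "A \<in> carrier_mat n n"
  shows "A ^\<^sub>m a * A ^\<^sub>m b = A ^\<^sub>m (a + b)"
proof (induction b)
  case 0 then show ?case using A by simp
next
  case (Suc b)
  have "A ^\<^sub>m a * A ^\<^sub>m Suc b = (A ^\<^sub>m a * A ^\<^sub>m b) * A" using A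
    by (simp del: assoc_mult_mat add: assoc_mult_mat[symmetric, of _ n n _ n _ n])
  also have "\<dots> = A ^\<^sub>m (a + Suc b)" using Suc by simp
  finally show ?case .
qed

lemma kernel_pow:
  fixes A :: "real mat"
  assumes A: "A \<in> carrier_mat n n" and sym: "transpose_mat A = A"
  shows "C \<in> carrier_mat n n \<Longrightarrow> A ^\<^sub>m k * (A * C) = 0\<^sub>m n n \<Longrightarrow> A * C = 0\<^sub>m n n"
proof (induction k arbitrary: C)
  case 0 then show ?case using A by simp
next
  case (Suc k)
  have "A ^\<^sub>m Suc k * (A * C) = A ^\<^sub>m k * (A * (A * C))"
    using A Suc.prems(1) by (simp add: assoc_mult_mat[of "A ^\<^sub>m k" n n A n "A * C" n])
  hence "A ^\<^sub>m k * (A * (A * C)) = 0\<^sub>m n n" using Suc.prems by simp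
  hence "A * (A * C) = 0\<^sub>m n n" using Suc.IH[of "A * C"] A Suc.prems(1) by simp
  thus ?case by (rule kernel_sq[OF A Suc.prems(1) sym])
qed

lemma powers_dep:
  fixes A :: "real mat"
  assumes A: "A \<in> carrier_mat n n"
  shows "\<exists>c k0. k0 \<le> n * n \<and> c k0 \<noteq> 0 \<and> mlc n c {0..n*n} (\<lambda>k. A ^\<^sub>m k) = 0\<^sub>m n n"
proof -
  define N where "N = n * n"
  define M :: "real mat" where "M = mat (Suc N) (Suc N) (\<lambda>(r,k). if r < N then (A ^\<^sub>m k) $$ (r div n, r mod n) else 0)"
  have M: "M \<in> carrier_mat (Suc N) (Suc N)" unfolding M_def by auto
  have Mt: "transpose_mat M \<in> carrier_mat (Suc N) (Suc N)" using M by auto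
  have tz: "transpose_mat M *\<^sub>v unit_vec (Suc N) N = 0\<^sub>v (Suc N)"
  proof (rule eq_vecI)
    fix i assume "i < dim_vec (0\<^sub>v (Suc N) :: real vec)"
    hence i: "i < Suc N" by simp
    have "(transpose_mat M *\<^sub>v unit_vec (Suc N) N) $ i = transpose_mat M $$ (i, N)"
      using i M by (simp add: scalar_prod_def unit_vec_def row_def sum.delta' lessThan_atLeast0[symmetric]
          cong: if_cong)
    also have "\<dots> = 0" using i unfolding M_def by simp
    finally show "(transpose_mat M *\<^sub>v unit_vec (Suc N) N) $ i = 0\<^sub>v (Suc N) $ i" using i by simp
  qed (use M in simp)
  moreover have uz: "unit_vec (Suc N) N \<noteq> (0\<^sub>v (Suc N) :: real vec)"
  proof
    assume "unit_vec (Suc N) N = (0\<^sub>v (Suc N) :: real vec)"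
    hence "unit_vec (Suc N) N $ N = (0\<^sub>v (Suc N) :: real vec) $ N" by simp
    thus False by simp
  qed
  ultimately have "det (transpose_mat M) = 0"
    unfolding det_0_iff_vec_prod_zero[OF Mt] using tz uz unit_vec_carrier by blast
  hence "det M = 0" using det_transpose[OF M] by simp
  then obtain v where v: "v \<in> carrier_vec (Suc N)" "v \<noteq> 0\<^sub>v (Suc N)" "M *\<^sub>v v = 0\<^sub>v (Suc N)"
    using det_0_iff_vec_prod_zero[OF M] by auto
  have "\<exists>k0 < Suc N. v $ k0 \<noteq> 0"
  proof (rule ccontr)
    assume "\<not> ?thesis"
    hence "v = 0\<^sub>v (Suc N)" using v(1) by (intro eq_vecI) auto
    thus False using v(2) by simp
  qed
  then obtain k0 where k0: "k0 < Suc N" "v $ k0 \<noteq> 0" by auto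
  have "mlc n (\<lambda>k. v $ k) {0..N} (\<lambda>k. A ^\<^sub>m k) = 0\<^sub>m n n"
  proof (rule eq_matI)
    fix i j assume "i < dim_row (0\<^sub>m n n :: real mat)" "j < dim_col (0\<^sub>m n n :: real mat)"
    hence i: "i < n" and j: "j < n" by auto
    define r where "r = i * n + j"
    have rN: "r < N"
    proof -
      have "i * n + j < Suc i * n" using j by simp
      moreover have "Suc i * n \<le> n * n" using i by (intro mult_le_mono1) simp
      ultimately show ?thesis unfolding r_def N_def by linarith
    qed
    have rd: "r div n = i" "r mod n = j" unfolding r_def using j by auto
    have "(M *\<^sub>v v) $ r = (\<Sum>k<Suc N. M $$ (r,k) * v $ k)"
      using M v(1) rN by (simp add: scalar_prod_def row_def lessThan_atLeast0)
    also have "\<dots> = (\<Sum>k\<in>{0..N}. v $ k * (A ^\<^sub>m k) $$ (i,j))"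
      using rN rd unfolding M_def by (auto simp: mult.commute atLeast0AtMost lessThan_Suc_atMost intro!: sum.cong)
    finally have "(\<Sum>k\<in>{0..N}. v $ k * (A ^\<^sub>m k) $$ (i,j)) = 0"
      using v(3) rN by simp
    thus "mlc n (\<lambda>k. v $ k) {0..N} (\<lambda>k. A ^\<^sub>m k) $$ (i,j) = 0\<^sub>m n n $$ (i,j)"
      using i j by simp
  qed auto
  thus ?thesis using k0 unfolding N_def by (intro exI[of _ "\<lambda>k. v $ k"] exI[of _ k0]) auto
qed

lemma assoc_app:
  fixes P Q R Y :: "real mat"
  assumes "P \<in> carrier_mat n n" "Q \<in> carrier_mat n n" "Y \<in> carrier_mat n n" "P * Q = R"
  shows "P * (Q * Y) = R * Y"
  using assms assoc_mult_mat[of P n n Q n Y n] by simp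

lemma group_inverse_unique:
  fixes A X Y :: "real mat"
  assumes A: "A \<in> carrier_mat n n" and X: "is_group_inverse n A X" and Y: "is_group_inverse n A Y"
  shows "X = Y"
proof -
  note as = assoc_mult_mat[of _ n n _ n _ n]
  have Xc: "X \<in> carrier_mat n n" and Yc: "Y \<in> carrier_mat n n"
    using X Y unfolding is_group_inverse_def by auto
  have dX: "A * X * A = A" "X * A * X = X" "A * X = X * A"
    using X unfolding is_group_inverse_def by auto
  have dY: "A * Y * A = A" "Y * A * Y = Y" "A * Y = Y * A"
    using Y unfolding is_group_inverse_def by auto
  have X1: "A * (X * A) = A" using dX(1) A Xc by (simp add: as)
  have X2: "X * (A * X) = X" using dX(2) A Xc by (simp add: as)
  have X3: "A * X = X * A" by (rule dX(3))
  have Y1: "A * (Y * A) = A" using dY(1) A Yc by (simp add: as)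
  have Y2: "Y * (A * Y) = Y" using dY(2) A Yc by (simp add: as)
  have Y3: "A * Y = Y * A" by (rule dY(3))
  have "A * (X * (A * Y)) = (A * X * A) * Y" using A Xc Yc by (simp add: as)
  hence "A * Y = A * (X * (A * Y))" using dX(1) by simp
  also have "\<dots> = (A * X) * (A * Y)" using A Xc Yc by (simp add: as)
  also have "\<dots> = (X * A) * (A * Y)" using X3 by simp
  also have "\<dots> = X * (A * (A * Y))" using A Xc Yc by (simp add: as)
  also have "\<dots> = X * (A * (Y * A))" using Y3 by simp
  also have "\<dots> = X * A" using Y1 by simp
  also have "\<dots> = A * X" using X3 by simp
  finally have AXY: "A * Y = A * X" .
  have "X = X * (A * Y)" using X2 AXY by simp
  also have "\<dots> = (X * A) * Y" using as A Xc Yc by simp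
  also have "\<dots> = (A * Y) * Y" using X3 AXY by simp
  also have "\<dots> = (Y * A) * Y" using Y3 by simp
  also have "\<dots> = Y" using Y2 as A Yc by simp
  finally show ?thesis .
qed

lemma drazin:
  fixes A Z :: "real mat"
  assumes A: "A \<in> carrier_mat n n" and Z: "Z \<in> carrier_mat n n"
    and sym: "transpose_mat A = A" and F1: "A * (A * Z) = A"
  shows "is_group_inverse n A (transpose_mat Z * A * Z)"
proof -
  note as = assoc_mult_mat[of _ n n _ n _ n]
  define W where "W = transpose_mat Z"
  have W: "W \<in> carrier_mat n n" using Z unfolding W_def by auto
  have "transpose_mat (A * (A * Z)) = W * (A * A)"
    using transpose_mult[OF A mult_carrier_mat[OF A Z]] transpose_mult[OF A Z] A Z sym
    unfolding W_def by (simp add: as)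
  hence F2: "W * (A * A) = A" using F1 sym by simp
  have F1g: "A * (A * (Z * Y)) = A * Y" if "Y \<in> carrier_mat n n" for Y
  proof -
    have "A * (A * (Z * Y)) = (A * (A * Z)) * Y" using A Z that by (simp add: as)
    thus ?thesis using F1 by simp
  qed
  have F2g: "W * (A * (A * Y)) = A * Y" if "Y \<in> carrier_mat n n" for Y
  proof -
    have "W * (A * (A * Y)) = (W * (A * A)) * Y" using A W that by (simp add: as)
    thus ?thesis using F2 by simp
  qed
  have AZA: "A * (Z * A) = A"
  proof -
    have "A * (Z * A) = W * (A * (A * (Z * A)))" using F2g[of "Z * A"] A Z by simp
    also have "\<dots> = W * (A * A)" using F1g[OF A] by simp
    finally show ?thesis using F2 by simp
  qed
  have AWA: "A * (W * A) = A"
  proof -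
    have "A * (W * A) = A * (W * (A * (A * Z)))" using F1 by simp
    also have "\<dots> = A * (A * Z)" using F2g[OF Z] by simp
    finally show ?thesis using F1 by simp
  qed
  have AZAg: "A * (Z * (A * Y)) = A * Y" if "Y \<in> carrier_mat n n" for Y
  proof -
    have "A * (Z * (A * Y)) = (A * (Z * A)) * Y" using A Z that by (simp add: as)
    thus ?thesis using AZA by simp
  qed
  have AWAg: "A * (W * (A * Y)) = A * Y" if "Y \<in> carrier_mat n n" for Y
  proof -
    have "A * (W * (A * Y)) = (A * (W * A)) * Y" using A W that by (simp add: as)
    thus ?thesis using AWA by simp
  qed
  have AZWA: "A * Z = W * A"
  proof -
    have "A * Z = W * (A * (A * Z))" using F2g[OF Z] by simp
    thus ?thesis using F1 by simp
  qed
  have X: "W * A * Z \<in> carrier_mat n n" using W A Z by auto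
  have e1: "A * (W * A * Z) * A = A"
    using A W Z AZA AWA by (simp add: as)
  have e2: "W * A * Z * A * (W * A * Z) = W * A * Z"
  proof -
    have "W * A * Z * A * (W * A * Z) = W * (A * (Z * (A * (W * (A * Z)))))"
      using A W Z by (simp add: as)
    also have "\<dots> = W * (A * (W * (A * Z)))" using AZAg[of "W * (A * Z)"] A W Z by simp
    also have "\<dots> = W * (A * Z)" using AWAg[OF Z] by simp
    finally show ?thesis using A W Z by (simp add: as)
  qed
  have e3: "A * (W * A * Z) = W * A * Z * A"
  proof -
    have "A * (W * A * Z) = A * Z" using AWAg[OF Z] A W Z by (simp add: as)
    moreover have "W * A * Z * A = W * A" using AZA A W Z by (simp add: as)
    ultimately show ?thesis using AZWA by simp
  qed
  show ?thesis unfolding is_group_inverse_def W_def[symmetric] using X e1 e2 e3 by simp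
qed

lemma mlc_cong: "(\<And>k. k \<in> K \<Longrightarrow> F k = G k) \<Longrightarrow> mlc n c K F = mlc n c K G"
  unfolding mlc_def by (intro cong_mat refl) (auto intro!: sum.cong)

lemma exists_Z:
  fixes A :: "real mat"
  assumes A: "A \<in> carrier_mat n n" and sym: "transpose_mat A = A"
  shows "\<exists>Z \<in> carrier_mat n n. A * (A * Z) = A"
proof -
  define N where "N = n * n"
  obtain c k0 where k0: "k0 \<le> N" "c k0 \<noteq> 0" and P0: "mlc n c {0..N} (\<lambda>k. A ^\<^sub>m k) = 0\<^sub>m n n"
    using powers_dep[OF A] unfolding N_def by blast
  define m where "m = (LEAST k. c k \<noteq> 0)"
  have cm: "c m \<noteq> 0" unfolding m_def by (rule LeastI[of _ k0], rule k0(2))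
  have mN: "m \<le> N" using Least_le[of "\<lambda>k. c k \<noteq> 0" k0] k0 unfolding m_def by simp
  have below: "c k = 0" if "k < m" for k using not_less_Least[of k "\<lambda>k. c k \<noteq> 0"] that
    unfolding m_def by auto
  define B where "B = mlc n c {m..N} (\<lambda>k. A ^\<^sub>m (k - m))"
  have Bc: "B \<in> carrier_mat n n" unfolding B_def by simp
  have "A ^\<^sub>m m * B = mlc n c {m..N} (\<lambda>k. A ^\<^sub>m m * A ^\<^sub>m (k - m))"
    unfolding B_def by (rule mult_mlc) (use A in auto)
  also have "\<dots> = 0\<^sub>m n n"
  proof (rule eq_matI)
    fix i j assume "i < dim_row (0\<^sub>m n n :: real mat)" "j < dim_col (0\<^sub>m n n :: real mat)"
    hence i: "i < n" and j: "j < n" by auto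
    have "(\<Sum>k\<in>{m..N}. c k * (A ^\<^sub>m m * A ^\<^sub>m (k - m)) $$ (i,j))
        = (\<Sum>k\<in>{m..N}. c k * (A ^\<^sub>m k) $$ (i,j))"
      using pow_add_mat[OF A] by (intro sum.cong) auto
    also have "\<dots> = (\<Sum>k\<in>{0..N}. c k * (A ^\<^sub>m k) $$ (i,j))"
      by (rule sum.mono_neutral_left) (auto simp: below)
    also have "\<dots> = 0" using arg_cong[OF P0, of "\<lambda>M. M $$ (i,j)"] i j by simp
    finally show "mlc n c {m..N} (\<lambda>k. A ^\<^sub>m m * A ^\<^sub>m (k - m)) $$ (i,j) = 0\<^sub>m n n $$ (i,j)"
      using i j by simp
  qed auto
  finally have AmB: "A ^\<^sub>m m * B = 0\<^sub>m n n" .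
  have AB: "A * B = 0\<^sub>m n n"
  proof (cases m)
    case 0
    then show ?thesis using AmB A Bc by simp
  next
    case (Suc k)
    have "A ^\<^sub>m m * B = A ^\<^sub>m k * (A * B)"
      using A Bc Suc by (simp add: assoc_mult_mat[of "A ^\<^sub>m k" n n A n B n])
    thus ?thesis using kernel_pow[OF A sym Bc, of k] AmB by simp
  qed
  define R where "R = mlc n c {Suc m..N} (\<lambda>k. A ^\<^sub>m (k - Suc m))"
  define Z where "Z = mlc n (\<lambda>k. - c k / c m) {Suc m..N} (\<lambda>k. A ^\<^sub>m (k - Suc m))"
  have AB': "A * B = mlc n c {m..N} (\<lambda>k. A ^\<^sub>m Suc (k - m))"
    unfolding B_def using mult_mlc[OF A, of "{m..N}" "\<lambda>k. A ^\<^sub>m (k - m)" c] pow_left[OF A] A by simp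
  have pp: "A * (A * A ^\<^sub>m j) = A ^\<^sub>m Suc (Suc j)" for j by (simp only: pow_left[OF A])
  have pp2: "A * (A * A ^\<^sub>m (k - Suc m)) = A ^\<^sub>m Suc (k - m)" if "k \<in> {Suc m..N}" for k
  proof -
    have e: "Suc (Suc (k - Suc m)) = Suc (k - m)" using that by auto
    show ?thesis using pp[of "k - Suc m"] unfolding e .
  qed
  have AAZ: "A * (A * Z) = mlc n (\<lambda>k. - c k / c m) {Suc m..N} (\<lambda>k. A ^\<^sub>m Suc (k - m))"
  proof -
    have "A * (A * Z) = mlc n (\<lambda>k. - c k / c m) {Suc m..N} (\<lambda>k. A * (A * A ^\<^sub>m (k - Suc m)))"
      unfolding Z_def using A
      by (simp add: mult_mlc[OF A] )
    also have "\<dots> = mlc n (\<lambda>k. - c k / c m) {Suc m..N} (\<lambda>k. A ^\<^sub>m Suc (k - m))"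
      by (rule mlc_cong) (use pp2 in auto)
    finally show ?thesis .
  qed
  show ?thesis
  proof (intro bexI[of _ Z])
    show "Z \<in> carrier_mat n n" unfolding Z_def by simp
    show "A * (A * Z) = A"
    proof (rule eq_matI)
      fix i j assume "i < dim_row A" "j < dim_col A"
      hence i: "i < n" and j: "j < n" using A by auto
      have "0 = (A * B) $$ (i,j)" using AB i j by simp
      also have "\<dots> = (\<Sum>k\<in>{m..N}. c k * (A ^\<^sub>m Suc (k - m)) $$ (i,j))" using AB' i j by simp
      also have "\<dots> = c m * A $$ (i,j) + (\<Sum>k\<in>{Suc m..N}. c k * (A ^\<^sub>m Suc (k - m)) $$ (i,j))"
      proof -
        have "{m..N} = insert m {Suc m..N}" using mN by auto
        thus ?thesis using A by simp
      qed
      finally have eq: "(\<Sum>k\<in>{Suc m..N}. c k * (A ^\<^sub>m Suc (k - m)) $$ (i,j)) = - c m * A $$ (i,j)"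
        by simp
      have "(A * (A * Z)) $$ (i,j) = (\<Sum>k\<in>{Suc m..N}. - c k / c m * (A ^\<^sub>m Suc (k - m)) $$ (i,j))"
        using AAZ i j by simp
      also have "\<dots> = - (\<Sum>k\<in>{Suc m..N}. c k * (A ^\<^sub>m Suc (k - m)) $$ (i,j)) / c m"
        by (simp add: sum_divide_distrib sum_negf)
      also have "\<dots> = A $$ (i,j)" using eq cm by simp
      finally show "(A * (A * Z)) $$ (i,j) = A $$ (i,j)" .
    qed (use A in \<open>auto simp: Z_def\<close>)
  qed
qed

lemma group_inverse_ok:
  fixes A :: "real mat"
  assumes A: "A \<in> carrier_mat n n" and sym: "transpose_mat A = A"
  shows "is_group_inverse n A (group_inverse n A)"
proof -
  obtain Z where Z: "Z \<in> carrier_mat n n" "A * (A * Z) = A" using exists_Z[OF A sym] by blast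
  have ex: "is_group_inverse n A (transpose_mat Z * A * Z)" by (rule drazin[OF A Z(1) sym Z(2)])
  show ?thesis unfolding group_inverse_def
    by (rule theI[of _ "transpose_mat Z * A * Z"], rule ex, rule group_inverse_unique[OF A _ ex])
qed

lemma tree_sym_adj: "weighted_tree n A \<Longrightarrow> adj n A i j \<Longrightarrow> adj n A j i"
  unfolding weighted_tree_def adj_def by auto

lemma adj_irr: "adj n A i j \<Longrightarrow> i \<noteq> j"
  unfolding adj_def by auto

lemma adj_lt: "adj n A i j \<Longrightarrow> i < n \<and> j < n"
  unfolding adj_def by auto

lemma tree_conn: "weighted_tree n A \<Longrightarrow> i < n \<Longrightarrow> j < n \<Longrightarrow> (adj n A)\<^sup>*\<^sup>* i j"
  unfolding weighted_tree_def graph_connected_def by blast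

lemma tree_nocyc: "weighted_tree n A \<Longrightarrow> \<not> is_cycle n A vs"
  unfolding weighted_tree_def graph_acyclic_def by auto

lemma cyc3:
  assumes "adj n A x y" "adj n A y z" "adj n A z x" "x \<noteq> z"
  shows "is_cycle n A [x,y,z]"
  using assms adj_irr[OF assms(1)] adj_irr[OF assms(2)]
  unfolding is_cycle_def by (auto simp: less_Suc_eq numeral_eq_Suc)

lemma cyc4:
  assumes "adj n A x y" "adj n A y z" "adj n A z u" "adj n A u x" "x \<noteq> z" "y \<noteq> u"
  shows "is_cycle n A [x,y,z,u]"
  using assms adj_irr[OF assms(1)] adj_irr[OF assms(2)] adj_irr[OF assms(3)] adj_irr[OF assms(4)]
  unfolding is_cycle_def by (auto simp: less_Suc_eq numeral_eq_Suc)

lemma cyc6: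
  assumes "adj n A x1 x2" "adj n A x2 x3" "adj n A x3 x4" "adj n A x4 x5" "adj n A x5 x6" "adj n A x6 x1"
    "distinct [x1,x2,x3,x4,x5,x6]"
  shows "is_cycle n A [x1,x2,x3,x4,x5,x6]"
  unfolding is_cycle_def
proof (intro conjI allI impI)
  fix k assume "Suc k < length [x1,x2,x3,x4,x5,x6]"
  hence "k = 0 \<or> k = 1 \<or> k = 2 \<or> k = 3 \<or> k = 4" by simp presburger
  thus "adj n A ([x1,x2,x3,x4,x5,x6] ! k) ([x1,x2,x3,x4,x5,x6] ! Suc k)"
    by (elim disjE) (simp_all add: assms)
qed (use assms in simp_all)

lemma path_ends:
  assumes T: "weighted_tree n A"
    and p: "adj n A a b" "adj n A b c" "adj n A c d" "a \<noteq> c" "b \<noteq> d"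
  shows "a \<noteq> d \<and> \<not> adj n A a d"
proof
  note sy = tree_sym_adj[OF T]
  show ad: "a \<noteq> d"
  proof
    assume "a = d"
    hence "is_cycle n A [a,b,c]" using cyc3[OF p(1,2)] p(3,4) by simp
    thus False using tree_nocyc[OF T] by blast
  qed
  show "\<not> adj n A a d"
  proof
    assume "adj n A a d"
    hence "is_cycle n A [a,b,c,d]" using cyc4[OF p(1,2,3)] sy p(4,5) by blast
    thus False using tree_nocyc[OF T] by blast
  qed
qed

lemma walk3:
  assumes T: "weighted_tree n A"
    and p: "adj n A a b" "adj n A b c" "adj n A c d" "a \<noteq> c" "b \<noteq> d"
    and w: "adj n A a k" "adj n A k l" "adj n A l d"
  shows "k = b \<and> l = c"
proof (rule ccontr)
  assume H: "\<not> (k = b \<and> l = c)"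
  note sy = tree_sym_adj[OF T]
  note nc = tree_nocyc[OF T]
  have ad: "a \<noteq> d" "\<not> adj n A a d" using path_ends[OF T p] by auto
  have ir: "a \<noteq> b" "b \<noteq> c" "c \<noteq> d" "a \<noteq> k" "k \<noteq> l" "l \<noteq> d"
    using adj_irr p w by blast+
  have rs: "adj n A b a" "adj n A c b" "adj n A d c" "adj n A k a" "adj n A l k" "adj n A d l"
    using sy p w by blast+
  show False
  proof (cases "k = b")
    case True
    hence lc: "l \<noteq> c" using H by simp
    have "is_cycle n A [b,c,d,l]"
      by (rule cyc4) (use p w True rs lc ir in auto)
    thus False using nc by blast
  next
    case kb: False
    show False
    proof (cases "l = c")
      case True
      have "is_cycle n A [a,b,c,k]"
        by (rule cyc4) (use p w True rs kb ir in auto)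
      thus False using nc by blast
    next
      case lc: False
      show False
      proof (cases "k = c")
        case True
        have "is_cycle n A [a,b,c]" by (rule cyc3) (use p w True rs in auto)
        thus False using nc by blast
      next
        case kc: False
        show False
        proof (cases "l = b")
          case True
          have "is_cycle n A [b,c,d]" by (rule cyc3) (use p w True rs in auto)
          thus False using nc by blast
        next
          case lb: False
          have kd: "k \<noteq> d" using w(1) ad by auto
          have la: "l \<noteq> a" using w(3) ad by auto
          have "is_cycle n A [a,b,c,d,l,k]"
          proof -
            have "distinct [a,b,c,d,l,k]" using p(4,5) ir kb lc kc lb kd la ad(1) by auto
            thus ?thesis by (rule cyc6[OF p(1,2,3) rs(6) rs(5) rs(4)])
          qed
          thus False using nc by blast
        qed
      qed
    qed
  qed
qed

lemma nonstar_path: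
  assumes T: "weighted_tree n A" and ns: "\<not> weighted_star n A"
  shows "\<exists>a b c d. adj n A a b \<and> adj n A b c \<and> adj n A c d \<and> a \<noteq> c \<and> b \<noteq> d"
proof (rule ccontr)
  assume "\<not> ?thesis"
  hence H: "\<And>a b c d. adj n A a b \<Longrightarrow> adj n A b c \<Longrightarrow> adj n A c d \<Longrightarrow> a = c \<or> b = d" by blast
  note sy = tree_sym_adj[OF T]
  have n1: "n \<ge> 1" using T unfolding weighted_tree_def by auto
  have n2: "n \<ge> 2"
  proof (rule ccontr)
    assume "\<not> n \<ge> 2"
    hence "n = 1" using n1 by simp
    hence "weighted_star n A" using T unfolding weighted_star_def by (intro conjI exI[of _ 0]) auto
    thus False using ns by simp
  qed
  have "(adj n A)\<^sup>*\<^sup>* 0 1" using tree_conn[OF T, of 0 1] n2 by simp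
  then obtain y where y: "adj n A 0 y"
    by (metis converse_rtranclpE zero_neq_one)
  obtain p q where pq: "adj n A p q" and leaf: "\<And>x. adj n A q x \<Longrightarrow> x = p"
  proof (cases "\<exists>x. adj n A 0 x \<and> x \<noteq> y")
    case True
    then obtain x where x: "adj n A 0 x" "x \<noteq> y" by auto
    have "\<And>z. adj n A y z \<Longrightarrow> z = 0"
    proof -
      fix z assume "adj n A y z"
      from H[OF sy[OF x(1)] y this] x(2) show "z = 0" by auto
    qed
    thus ?thesis using that[of 0 y] y by blast
  next
    case False
    hence "\<And>x. adj n A 0 x \<Longrightarrow> x = y" by auto
    thus ?thesis using that[of y 0] sy[OF y] by blast
  qed
  have reach: "j = p \<or> adj n A p j" if "(adj n A)\<^sup>*\<^sup>* p j" for j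
    using that
  proof (induction rule: rtranclp_induct)
    case base then show ?case by simp
  next
    case (step j k)
    show ?case
    proof (cases "j = p")
      case True then show ?thesis using step by simp
    next
      case False
      hence pj: "adj n A p j" using step by simp
      show ?thesis
      proof (cases "j = q")
        case True then show ?thesis using leaf step by simp
      next
        case False
        from H[OF sy[OF pq] pj step(2)] False show ?thesis by auto
      qed
    qed
  qed
  have "p < n" using adj_lt[OF pq] by simp
  moreover have "\<forall>j<n. j \<noteq> p \<longrightarrow> adj n A p j"
  proof (intro allI impI)
    fix j assume "j < n" "j \<noteq> p"
    moreover have "(adj n A)\<^sup>*\<^sup>* p j" using tree_conn[OF T \<open>p < n\<close> \<open>j < n\<close>] .
    ultimately show "adj n A p j" using reach by auto
  qed
  ultimately have "weighted_star n A" using T unfolding weighted_star_def by blast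
  thus False using ns by simp
qed

lemma tree_carrier: "weighted_tree n A \<Longrightarrow> A \<in> carrier_mat n n"
  unfolding weighted_tree_def by blast

lemma tree_symm: "weighted_tree n A \<Longrightarrow> i < n \<Longrightarrow> j < n \<Longrightarrow> A $$ (i,j) = A $$ (j,i)"
  unfolding weighted_tree_def by blast

lemma tree_diag: "weighted_tree n A \<Longrightarrow> i < n \<Longrightarrow> A $$ (i,i) = 0"
  unfolding weighted_tree_def by blast

lemma tree_transpose: assumes T: "weighted_tree n A" shows "transpose_mat A = A"
proof -
  have A: "A \<in> carrier_mat n n" by (rule tree_carrier[OF T])
  show ?thesis
  proof (rule eq_matI)
    fix i j assume "i < dim_row A" "j < dim_col A"
    hence "i < n" "j < n" using A by auto
    thus "transpose_mat A $$ (i,j) = A $$ (i,j)" using A tree_symm[OF T, of j i] by simp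
  qed (use A in auto)
qed

lemma adj_iff: "weighted_tree n A \<Longrightarrow> i < n \<Longrightarrow> j < n \<Longrightarrow> adj n A i j \<longleftrightarrow> A $$ (i,j) \<noteq> 0"
  unfolding adj_def using tree_diag by metis

lemma star_A2:
  fixes A :: "real mat" and w :: "nat \<Rightarrow> real"
  assumes A: "A \<in> carrier_mat n n" and c: "c < n" and wc: "w c = 0"
    and Af: "\<And>i j. i < n \<Longrightarrow> j < n \<Longrightarrow> A $$ (i,j) = (if i = c then w j else 0) + (if j = c then w i else 0)"
    and i: "i < n" and j: "j < n"
  shows "(A * A) $$ (i,j) = (if i = c \<and> j = c then (\<Sum>k<n. w k * w k) else 0) + w i * w j"
proof -
  have "(A * A) $$ (i,j) = (\<Sum>k<n. A $$ (i,k) * A $$ (k,j))"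
    using A i j by (simp add: scalar_prod_def row_def col_def lessThan_atLeast0 carrier_matD)
  also have "\<dots> = (\<Sum>k<n. ((if i = c then w k else 0) + (if k = c then w i else 0)) *
                          ((if k = c then w j else 0) + (if j = c then w k else 0)))"
    using i j by (intro sum.cong) (auto simp: Af)
  also have "\<dots> = (if i = c \<and> j = c then (\<Sum>k<n. w k * w k) else 0) + w i * w j"
    using c wc by (cases "i = c"; cases "j = c") (simp_all add: algebra_simps sum.distrib if_distrib if_distribR cong: if_cong)
  finally show ?thesis .
qed

lemma star_A3:
  fixes A :: "real mat" and w :: "nat \<Rightarrow> real"
  assumes A: "A \<in> carrier_mat n n" and c: "c < n" and wc: "w c = 0"
    and Af: "\<And>i j. i < n \<Longrightarrow> j < n \<Longrightarrow> A $$ (i,j) = (if i = c then w j else 0) + (if j = c then w i else 0)"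
    and i: "i < n" and j: "j < n"
  shows "(A * A * A) $$ (i,j) = (\<Sum>k<n. w k * w k) * A $$ (i,j)"
proof -
  let ?s = "\<Sum>k<n. w k * w k"
  have AA: "A * A \<in> carrier_mat n n" using A by auto
  have "(A * A * A) $$ (i,j) = (\<Sum>k<n. (A * A) $$ (i,k) * A $$ (k,j))"
    using A AA i j by (simp del: assoc_mult_mat add: scalar_prod_def row_def col_def lessThan_atLeast0 carrier_matD)
  also have "\<dots> = (\<Sum>k<n. ((if i = c \<and> k = c then ?s else 0) + w i * w k) *
                          ((if k = c then w j else 0) + (if j = c then w k else 0)))"
    using i j by (intro sum.cong) (auto simp: Af star_A2[OF A c wc Af])
  also have "\<dots> = ?s * ((if i = c then w j else 0) + (if j = c then w i else 0))"
    using c wc by (cases "i = c"; cases "j = c") (simp_all add: algebra_simps sum.distrib if_distrib if_distribR sum_distrib_left cong: if_cong)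
  also have "\<dots> = ?s * A $$ (i,j)" using Af i j by simp
  finally show ?thesis .
qed

lemma sum2_single:
  fixes f :: "nat \<Rightarrow> nat \<Rightarrow> real"
  assumes H: "\<And>k l. k < n \<Longrightarrow> l < n \<Longrightarrow> f k l \<noteq> 0 \<Longrightarrow> k = b \<and> l = c" and b: "b < n" and c: "c < n"
  shows "(\<Sum>l<n. \<Sum>k<n. f k l) = f b c"
proof -
  have z1: "(\<Sum>k<n. f k l) = 0" if l: "l \<in> {..<n} - {c}" for l
  proof (rule sum.neutral, rule ballI)
    fix k assume "k \<in> {..<n}"
    thus "f k l = 0" using H[of k l] l by blast
  qed
  have z2: "f k c = 0" if k: "k \<in> {..<n} - {b}" for k
    using H[of k c] k c by blast
  have "(\<Sum>l<n. \<Sum>k<n. f k l) = (\<Sum>l\<in>{c}. \<Sum>k<n. f k l)"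
    by (rule sum.mono_neutral_right) (use c z1 in auto)
  also have "\<dots> = (\<Sum>k<n. f k c)" by simp
  also have "\<dots> = (\<Sum>k\<in>{b}. f k c)"
    by (rule sum.mono_neutral_right) (use b z2 in auto)
  also have "\<dots> = f b c" by simp
  finally show ?thesis .
qed

lemma triple_entry:
  fixes A G :: "real mat"
  assumes A: "A \<in> carrier_mat n n" and G: "G \<in> carrier_mat n n" and a: "a < n" and d: "d < n"
  shows "(A * G * A) $$ (a,d) = (\<Sum>l<n. \<Sum>k<n. A $$ (a,k) * G $$ (k,l) * A $$ (l,d))"
proof -
  have AG: "A * G \<in> carrier_mat n n" using A G by auto
  have "(A * G * A) $$ (a,d) = (\<Sum>l<n. (A * G) $$ (a,l) * A $$ (l,d))"
    using AG A G a d by (simp del: assoc_mult_mat add: scalar_prod_def row_def col_def lessThan_atLeast0 carrier_matD)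
  also have "\<dots> = (\<Sum>l<n. (\<Sum>k<n. A $$ (a,k) * G $$ (k,l)) * A $$ (l,d))"
    using A G a d by (intro sum.cong) (auto simp: scalar_prod_def row_def col_def lessThan_atLeast0 carrier_matD)
  also have "\<dots> = (\<Sum>l<n. \<Sum>k<n. A $$ (a,k) * G $$ (k,l) * A $$ (l,d))"
    by (simp add: sum_distrib_right)
  finally show ?thesis .
qed

lemma star_pattern:
  fixes A :: "real mat"
  assumes S: "weighted_star n A"
  shows "same_pattern n A (group_inverse n A)"
proof -
  have T: "weighted_tree n A" using S unfolding weighted_star_def by blast
  obtain c where c: "c < n" and cadj: "\<And>j. j < n \<Longrightarrow> j \<noteq> c \<Longrightarrow> adj n A c j"
    using S unfolding weighted_star_def by blast
  have A: "A \<in> carrier_mat n n" by (rule tree_carrier[OF T])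
  have sym: "transpose_mat A = A" by (rule tree_transpose[OF T])
  define w where "w i = A $$ (i,c)" for i
  have wc: "w c = 0" unfolding w_def using tree_diag[OF T c] .
  have Af: "A $$ (i,j) = (if i = c then w j else 0) + (if j = c then w i else 0)"
    if i: "i < n" and j: "j < n" for i j
  proof (cases "i = c")
    case True
    then show ?thesis using wc tree_symm[OF T j c] unfolding w_def by auto
  next
    case ic: False
    show ?thesis
    proof (cases "j = c")
      case True
      then show ?thesis using ic unfolding w_def by simp
    next
      case jc: False
      have "A $$ (i,j) = 0"
      proof (rule ccontr)
        assume nz: "A $$ (i,j) \<noteq> 0"
        hence ij: "adj n A i j" using adj_iff[OF T i j] by simp
        have "is_cycle n A [c,i,j]"
          by (rule cyc3[OF cadj[OF i ic] ij tree_sym_adj[OF T cadj[OF j jc]]]) (use jc in auto)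
        thus False using tree_nocyc[OF T] by blast
      qed
      thus ?thesis using ic jc by simp
    qed
  qed
  define s where "s = (\<Sum>k<n. w k * w k)"
  have A3m: "A * A * A = s \<cdot>\<^sub>m A"
  proof (rule eq_matI)
    fix i j assume "i < dim_row (s \<cdot>\<^sub>m A)" "j < dim_col (s \<cdot>\<^sub>m A)"
    hence i: "i < n" and j: "j < n" using A by auto
    show "(A * A * A) $$ (i,j) = (s \<cdot>\<^sub>m A) $$ (i,j)"
      using star_A3[OF A c wc Af i j] i j A unfolding s_def by simp
  qed (use A in auto)
  define G where "G = group_inverse n A"
  have isG: "is_group_inverse n A G" unfolding G_def by (rule group_inverse_ok[OF A sym])
  show ?thesis
  proof (cases "s = 0")
    case True
    have "\<forall>k\<in>{..<n}. w k * w k = 0"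
      using True unfolding s_def by (subst sum_nonneg_eq_0_iff[symmetric]) auto
    hence w0: "w k = 0" if "k < n" for k using that by auto
    have A0: "A = 0\<^sub>m n n"
    proof (rule eq_matI)
      fix i j assume "i < dim_row (0\<^sub>m n n :: real mat)" "j < dim_col (0\<^sub>m n n :: real mat)"
      hence i: "i < n" and j: "j < n" by auto
      show "A $$ (i,j) = 0\<^sub>m n n $$ (i,j)" using Af[OF i j] w0[OF i] w0[OF j] i j by simp
    qed (use A in auto)
    have "is_group_inverse n A (0\<^sub>m n n)" unfolding is_group_inverse_def A0 by simp
    hence "G = 0\<^sub>m n n" by (rule group_inverse_unique[OF A isG])
    thus ?thesis unfolding same_pattern_def G_def[symmetric] using A0 by simp
  next
    case False
    define X where "X = (1 / s) \<cdot>\<^sub>m A"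
    have X: "X \<in> carrier_mat n n" unfolding X_def using A by simp
    have AX: "A * X = (1 / s) \<cdot>\<^sub>m (A * A)" unfolding X_def by (rule mult_smult_distrib[OF A A])
    have XA: "X * A = (1 / s) \<cdot>\<^sub>m (A * A)" unfolding X_def by (rule mult_smult_assoc_mat[OF A A])
    have AA: "A * A \<in> carrier_mat n n" using A by simp
    have e1: "A * X * A = A"
    proof -
      have "A * X * A = (1 / s) \<cdot>\<^sub>m (A * A * A)" unfolding AX by (rule mult_smult_assoc_mat[OF AA A])
      also have "\<dots> = A" unfolding A3m using False A by (intro eq_matI) auto
      finally show ?thesis .
    qed
    have e2: "X * A * X = X"
    proof -
      have t1: "X * A * X = (1 / s) \<cdot>\<^sub>m (A * A) * ((1 / s) \<cdot>\<^sub>m A)"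
        by (subst XA) (simp only: X_def)
      have t2: "(1 / s) \<cdot>\<^sub>m (A * A) * ((1 / s) \<cdot>\<^sub>m A) = (1 / s) \<cdot>\<^sub>m (A * A * ((1 / s) \<cdot>\<^sub>m A))"
        by (rule mult_smult_assoc_mat[OF AA smult_carrier_mat[OF A]])
      have t3: "A * A * ((1 / s) \<cdot>\<^sub>m A) = (1 / s) \<cdot>\<^sub>m (A * A * A)"
        by (rule mult_smult_distrib[OF AA A])
      have t4: "(1 / s) \<cdot>\<^sub>m ((1 / s) \<cdot>\<^sub>m (A * A * A)) = X"
        unfolding A3m X_def using False A by (intro eq_matI) auto
      show ?thesis by (simp only: t1 t2 t3 t4)
    qed
    have "is_group_inverse n A X" unfolding is_group_inverse_def using X e1 e2 AX XA by simp
    hence GX: "G = X" by (rule group_inverse_unique[OF A isG])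
    show ?thesis unfolding same_pattern_def G_def[symmetric] GX X_def using False A by auto
  qed
qed

theorem corollary2p13:
  fixes n :: nat and A :: "real mat"
  assumes "weighted_tree n A"
    and "det A = 0"
  shows "same_pattern n A (group_inverse n A) \<longleftrightarrow> weighted_star n A"
proof
  assume S: "weighted_star n A"
  show "same_pattern n A (group_inverse n A)" by (rule star_pattern[OF S])
next
  assume sp: "same_pattern n A (group_inverse n A)"
  note T = assms(1)
  have A: "A \<in> carrier_mat n n" by (rule tree_carrier[OF T])
  have sym: "transpose_mat A = A" by (rule tree_transpose[OF T])
  define G where "G = group_inverse n A"
  have isG: "is_group_inverse n A G" unfolding G_def by (rule group_inverse_ok[OF A sym])
  have Gc: "G \<in> carrier_mat n n" and AGA: "A * G * A = A" using isG unfolding is_group_inverse_def by auto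
  have spG: "\<And>i j. i < n \<Longrightarrow> j < n \<Longrightarrow> G $$ (i,j) = 0 \<longleftrightarrow> A $$ (i,j) = 0"
    using sp unfolding same_pattern_def G_def by auto
  show "weighted_star n A"
  proof (rule ccontr)
    assume ns: "\<not> weighted_star n A"
    obtain a b c d where p: "adj n A a b" "adj n A b c" "adj n A c d" "a \<noteq> c" "b \<noteq> d"
      using nonstar_path[OF T ns] by blast
    have lt: "a < n" "b < n" "c < n" "d < n" using adj_lt p by blast+
    have ad: "a \<noteq> d" "\<not> adj n A a d" using path_ends[OF T p] by auto
    have Aad: "A $$ (a,d) = 0" using ad(2) adj_iff[OF T lt(1) lt(4)] by simp
    let ?f = "\<lambda>k l. A $$ (a,k) * G $$ (k,l) * A $$ (l,d)"
    have only: "k = b \<and> l = c" if k: "k < n" and l: "l < n" and nz: "?f k l \<noteq> 0" for k l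
    proof -
      have "A $$ (a,k) \<noteq> 0" "G $$ (k,l) \<noteq> 0" "A $$ (l,d) \<noteq> 0" using nz by auto
      hence "adj n A a k" "adj n A k l" "adj n A l d"
        using adj_iff[OF T lt(1) k] adj_iff[OF T k l] adj_iff[OF T l lt(4)] spG[OF k l] by auto
      thus ?thesis using walk3[OF T p] by blast
    qed
    have "(A * G * A) $$ (a,d) = ?f b c"
      unfolding triple_entry[OF A Gc lt(1) lt(4)] by (rule sum2_single[OF only lt(2) lt(3)])
    moreover have "?f b c \<noteq> 0"
      using adj_iff[OF T lt(1) lt(2)] adj_iff[OF T lt(2) lt(3)] adj_iff[OF T lt(3) lt(4)] spG[OF lt(2) lt(3)] p
      by auto
    ultimately show False using AGA Aad by simp
  qed
qed

end
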